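(* Let $T$ be a tree with at least $3$ vertices and $v\in V(T)$. Then \[ f_{T,v}(v)=2+\max_{\substack{S\subseteq T\\ v\in V(S)}}\Bigg(\min_{P\in\mathcal{P}_S(v)}\sum_{w\in V(P)}\big(\deg_S(w)-2\big)\Bigg), \] where $S$ ranges over the subtrees (connected subgraphs) of $T$ containing $v$.
   Context: For a tree $T$ rooted at $v$, the values $f_{T,v}(w)$, $w\in V(T)$, are defined recursively: if $w$ has no children (no descendants) in the rooted tree, $f_{T,v}(w)=0$; otherwise let $u_0,\dots,u_k$ be the children of $w$, let $T_i$ be the subtree consisting of $u_i$ and all its descendants, rooted at $u_i$, and order them so that $c_i:=f_{T_i,u_i}(u_i)$ satisfy $c_0\ge c_1\ge\cdots\ge c_k$; then $f_{T,v}(w)=\max_{0\le i\le k}(i+c_i)$. (Note $f_{T,v}(w)=f_{T_w,w}(w)$ where $T_w$ is the subtree of descendants of $w$.) For a subtree $S$ and $w\in V(S)$, $\deg_S(w)$ is the degree of $w$ in $S$. $\mathcal{P}_S(v)$ is the set of maximal paths in $S$ having $v$ as an endpoint (if $S$ is the single vertex $v$, this is the one-vertex path). *)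

theory Defs
  imports Main "HOL-Library.Multiset"
begin

definition graph :: "'a set \<Rightarrow> 'a set set \<Rightarrow> bool" where
  "graph V E \<longleftrightarrow> finite V \<and> (\<forall>e\<in>E. \<exists>x y. x \<noteq> y \<and> e = {x, y} \<and> x \<in> V \<and> y \<in> V)"

definition adj :: "'a set set \<Rightarrow> 'a \<Rightarrow> 'a \<Rightarrow> bool" where
  "adj E x y \<longleftrightarrow> x \<noteq> y \<and> {x, y} \<in> E"

definition is_path :: "'a set set \<Rightarrow> 'a list \<Rightarrow> bool" where
  "is_path E p \<longleftrightarrow> p \<noteq> [] \<and> distinct p \<and> (\<forall>i. Suc i < length p \<longrightarrow> adj E (p ! i) (p ! Suc i))"

definition path_edges :: "'a list \<Rightarrow> 'a set set" where
  "path_edges p = {{p ! i, p ! Suc i} | i. Suc i < length p}"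

definition connected_graph :: "'a set \<Rightarrow> 'a set set \<Rightarrow> bool" where
  "connected_graph V E \<longleftrightarrow> V \<noteq> {} \<and>
     (\<forall>x\<in>V. \<forall>y\<in>V. \<exists>p. is_path E p \<and> set p \<subseteq> V \<and> hd p = x \<and> last p = y)"

definition is_cycle :: "'a set set \<Rightarrow> 'a list \<Rightarrow> bool" where
  "is_cycle E c \<longleftrightarrow> length c \<ge> 3 \<and> is_path E c \<and> adj E (last c) (hd c)"

definition is_tree :: "'a set \<Rightarrow> 'a set set \<Rightarrow> bool" where
  "is_tree V E \<longleftrightarrow> graph V E \<and> connected_graph V E \<and> \<not> (\<exists>c. set c \<subseteq> V \<and> is_cycle E c)"

definition subgraph :: "'a set \<Rightarrow> 'a set set \<Rightarrow> 'a set \<Rightarrow> 'a set set \<Rightarrow> bool" where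
  "subgraph VS ES V E \<longleftrightarrow> VS \<subseteq> V \<and> ES \<subseteq> E \<and> graph VS ES"

definition deg :: "'a set set \<Rightarrow> 'a \<Rightarrow> nat" where
  "deg ES w = card {e \<in> ES. w \<in> e}"

definition path_from :: "'a set \<Rightarrow> 'a set set \<Rightarrow> 'a \<Rightarrow> 'a list \<Rightarrow> bool" where
  "path_from VS ES v p \<longleftrightarrow> is_path ES p \<and> set p \<subseteq> VS \<and> hd p = v"

definition max_paths :: "'a set \<Rightarrow> 'a set set \<Rightarrow> 'a \<Rightarrow> 'a list set" where
  "max_paths VS ES v = {p. path_from VS ES v p \<and>
     \<not> (\<exists>q. path_from VS ES v q \<and> set p \<subseteq> set q \<and> path_edges p \<subseteq> path_edges q \<and> set p \<noteq> set q)}"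

definition children :: "'a set \<Rightarrow> 'a set set \<Rightarrow> 'a \<Rightarrow> 'a \<Rightarrow> 'a set" where
  "children V E v w = {u \<in> V. adj E w u \<and>
     (\<exists>p. is_path E p \<and> set p \<subseteq> V \<and> hd p = v \<and> last p = u \<and> w \<in> set p)}"

definition f_step :: "('a \<Rightarrow> nat) \<Rightarrow> 'a set \<Rightarrow> nat" where
  "f_step g C = (if C = {} then 0 else
     (let cs = rev (sorted_list_of_multiset (image_mset g (mset_set C)))
      in Max {i + cs ! i | i. i < length cs}))"

definition f_tree :: "'a set \<Rightarrow> 'a set set \<Rightarrow> 'a \<Rightarrow> 'a \<Rightarrow> nat" where
  "f_tree V E v = (THE g. (\<forall>w\<in>V. g w = f_step g (children V E v w)) \<and> (\<forall>w. w \<notin> V \<longrightarrow> g w = 0))"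

end

theory Submission
  imports Defs
begin


definition walk :: "'a set set \<Rightarrow> 'a list \<Rightarrow> bool" where
  "walk E p \<longleftrightarrow> p \<noteq> [] \<and> successively (adj E) p"

lemma is_path_walk: "is_path E p \<longleftrightarrow> walk E p \<and> distinct p"
  unfolding is_path_def walk_def successively_conv_nth by blast

lemma adj_sym: "adj E x y \<Longrightarrow> adj E y x"
  unfolding adj_def by (auto simp: insert_commute)

lemma walk_rev: "walk E p \<Longrightarrow> walk E (rev p)"
  unfolding walk_def by (auto elim: successively_mono intro: adj_sym)

lemma walk_append: "walk E p \<Longrightarrow> walk E q \<Longrightarrow> last p = hd q \<Longrightarrow> walk E (p @ tl q)"
  unfolding walk_def
  by (cases q) (auto simp: successively_append_iff successively_Cons)

lemma walk_to_path:
  assumes "walk E p"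
  shows "\<exists>r. is_path E r \<and> set r \<subseteq> set p \<and> hd r = hd p \<and> last r = last p"
  using assms
proof (induction "length p" arbitrary: p rule: less_induct)
  case less
  show ?case
  proof (cases "distinct p")
    case True then show ?thesis using less.prems by (auto simp: is_path_walk)
  next
    case False
    then obtain xs ys zs y where p: "p = xs @ [y] @ ys @ [y] @ zs"
      using not_distinct_decomp by blast
    define p' where "p' = xs @ [y] @ zs"
    have w: "walk E p'" using less.prems unfolding p p'_def walk_def
      by (cases zs) (auto simp: successively_append_iff successively_Cons)
    have "length p' < length p" unfolding p p'_def by simp
    then obtain r where "is_path E r" "set r \<subseteq> set p'" "hd r = hd p'" "last r = last p'"
      using less.hyps w by blast
    moreover have "set p' \<subseteq> set p" "hd p' = hd p" "last p' = last p"
      unfolding p p'_def by (auto simp: hd_append)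
    ultimately show ?thesis by (metis order_trans)
  qed
qed

lemma graph_edge_sub: "graph V E \<Longrightarrow> e \<in> E \<Longrightarrow> e \<subseteq> V"
  unfolding graph_def by (metis empty_subsetI insert_subset)

lemma graph_adj: "graph V E \<Longrightarrow> adj E x y \<Longrightarrow> x \<in> V \<and> y \<in> V"
  unfolding adj_def using graph_edge_sub by (metis insert_subset)

lemma walk_set: "graph V E \<Longrightarrow> walk E p \<Longrightarrow> hd p \<in> V \<Longrightarrow> set p \<subseteq> V"
proof (induction p)
  case (Cons a p)
  then show ?case
    by (cases p) (auto simp: walk_def dest: graph_adj)
qed simp

locale rtree =
  fixes V :: "'a set" and E :: "'a set set" and v :: 'a
  assumes tree: "is_tree V E" and vV: "v \<in> V"
begin

lemma graphVE: "graph V E" using tree by (simp add: is_tree_def)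
lemma finV: "finite V" using graphVE by (simp add: graph_def)
lemma conn: "connected_graph V E" using tree by (simp add: is_tree_def)
lemma nocyc: "\<not> (set c \<subseteq> V \<and> is_cycle E c)" using tree by (simp add: is_tree_def)

lemma path_unique:
  assumes "is_path E p" "is_path E q" "hd p = hd q" "last p = last q"
  shows "p = q"
  using assms
proof (induction p arbitrary: q)
  case Nil then show ?case by (simp add: is_path_def)
next
  case (Cons x p)
  obtain q' where q: "q = x # q'" using Cons.prems by (cases q) (auto simp: is_path_def)
  show ?case
  proof (cases "p = []")
    case True
    then have "last q = x" using Cons.prems by simp
    then have "q' = []" using Cons.prems(2) q by (cases q' rule: rev_cases) (auto simp: is_path_def)
    then show ?thesis using True q by simp
  next
    case pne: False
    show ?thesis
    proof (cases "q' = []")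
      case True
      then have "last p = x" using Cons.prems pne q by simp
      then have False using Cons.prems(1) pne by (cases p rule: rev_cases) (auto simp: is_path_def)
      then show ?thesis ..
    next
      case qne: False
      have pp: "is_path E p" "is_path E q'" using Cons.prems pne qne q
        by (auto simp: is_path_walk walk_def successively_Cons)
      have lp: "last p = last q'" using Cons.prems pne qne q by simp
      show ?thesis
      proof (cases "hd p = hd q'")
        case True
        then show ?thesis using Cons.IH[OF pp(1) pp(2) True lp] q by simp
      next
        case False
        have wa: "walk E (p @ tl (rev q'))"
          using pp lp by (intro walk_append) (auto simp: is_path_walk walk_rev last_rev hd_rev)
        have hdw: "hd (p @ tl (rev q')) = hd p" using pne by simp
        have lw: "last (p @ tl (rev q')) = hd q'"
        proof (cases "tl (rev q') = []")
          case True
          then have "rev q' = [last q']" using qne by (cases "rev q'") auto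
          then have "q' = [last q']" by (metis rev_singleton_conv)
          then show ?thesis using True lp by (metis append_Nil2 list.sel(1))
        next
          case f: False
          have "last (tl (rev q')) = last (rev q')" using f by (simp add: last_tl)
          then show ?thesis using f qne by (simp add: last_rev)
        qed
        obtain r where r0: "is_path E r" "set r \<subseteq> set (p @ tl (rev q'))"
          "hd r = hd (p @ tl (rev q'))" "last r = last (p @ tl (rev q'))"
          using walk_to_path[OF wa] by blast
        have r: "is_path E r" "set r \<subseteq> set (p @ tl (rev q'))" "hd r = hd p" "last r = hd q'"
          using r0 hdw lw by auto
        have "set (tl (rev q')) \<subseteq> set (rev q')" by (cases "rev q'") auto
        then have "set (tl (rev q')) \<subseteq> set q'" by simp
        then have xr: "x \<notin> set r" using r(2) Cons.prems(1,2) q by (auto simp: is_path_def)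
        have adjx: "adj E x (hd p)" using Cons.prems(1) pne
          by (cases p) (auto simp: is_path_walk walk_def)
        have adjx2: "adj E x (hd q')" using Cons.prems(2) qne q
          by (cases q') (auto simp: is_path_walk walk_def)
        have "r \<noteq> []" using r(1) by (simp add: is_path_def)
        have "length r \<ge> 2"
          using r False \<open>r \<noteq> []\<close> by (cases r) (auto split: if_splits simp: Suc_le_eq)
        have cyc: "is_cycle E (x # r)"
          unfolding is_cycle_def using r xr adjx adjx2 \<open>length r \<ge> 2\<close> \<open>r \<noteq> []\<close>
          by (auto simp: is_path_walk walk_def successively_Cons adj_sym)
        have "set (x # r) \<subseteq> V"
          using walk_set[OF graphVE, of "x # r"] cyc adjx graph_adj[OF graphVE]
          by (auto simp: is_cycle_def is_path_walk)
        then show ?thesis using nocyc cyc by blast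
      qed
    qed
  qed
qed

end


lemma is_path_prefix: "is_path E (a @ b) \<Longrightarrow> a \<noteq> [] \<Longrightarrow> is_path E a"
  by (auto simp: is_path_walk walk_def successively_append_iff)

context rtree begin

definition pi :: "'a \<Rightarrow> 'a list" where
  "pi x = (THE p. is_path E p \<and> hd p = v \<and> last p = x)"

lemma pi_ex: "x \<in> V \<Longrightarrow> \<exists>p. is_path E p \<and> hd p = v \<and> last p = x"
  using conn vV unfolding connected_graph_def by blast

lemma pi_eq: "is_path E p \<Longrightarrow> hd p = v \<Longrightarrow> last p = x \<Longrightarrow> pi x = p"
  unfolding pi_def by (rule the_equality) (auto intro: path_unique)

lemma pi_prop: assumes "x \<in> V" shows "is_path E (pi x) \<and> hd (pi x) = v \<and> last (pi x) = x"
proof -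
  obtain p where p: "is_path E p" "hd p = v" "last p = x" using pi_ex[OF assms] by blast
  then have "pi x = p" by (rule pi_eq)
  then show ?thesis using p by simp
qed

lemma pi_ne: "x \<in> V \<Longrightarrow> pi x \<noteq> []"
  using pi_prop by (auto simp: is_path_def)

lemma pi_set: "x \<in> V \<Longrightarrow> set (pi x) \<subseteq> V"
  using walk_set[OF graphVE, of "pi x"] pi_prop[of x] vV by (auto simp: is_path_walk)

lemma pi_v: "pi v = [v]"
  by (rule pi_eq) (auto simp: is_path_def)

lemma pi_prefix: "x \<in> V \<Longrightarrow> pi x = a @ b \<Longrightarrow> a \<noteq> [] \<Longrightarrow> pi (last a) = a"
  using pi_prop[of x] is_path_prefix[of E a b] by (intro pi_eq) auto

lemma pi_split: "x \<in> V \<Longrightarrow> y \<in> set (pi x) \<Longrightarrow> \<exists>b. pi x = pi y @ b"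
proof -
  assume x: "x \<in> V" and y: "y \<in> set (pi x)"
  then obtain a b where ab: "pi x = a @ y # b" by (meson split_list)
  then have "pi y = a @ [y]" using pi_prefix[OF x, of "a @ [y]" b] by simp
  then show ?thesis using ab by auto
qed

definition par :: "'a \<Rightarrow> 'a" where "par x = last (butlast (pi x))"

lemma pi_par: assumes "x \<in> V" "x \<noteq> v"
  shows "pi x = pi (par x) @ [x]" "par x \<in> V" "adj E (par x) x"
proof -
  have p: "pi x = butlast (pi x) @ [x]" using pi_prop[OF assms(1)] pi_ne[OF assms(1)]
    by (metis append_butlast_last_id)
  have "butlast (pi x) \<noteq> []"
  proof
    assume "butlast (pi x) = []"
    then have "pi x = [x]" using p by simp
    then show False using pi_prop[OF assms(1)] assms(2) by simp
  qed
  then have pp: "pi (par x) = butlast (pi x)" unfolding par_def using pi_prefix[OF assms(1) p] by simp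
  then show "pi x = pi (par x) @ [x]" using p by simp
  show "par x \<in> V" using pi_set[OF assms(1)] \<open>butlast (pi x) \<noteq> []\<close> unfolding par_def
    by (metis in_set_butlastD last_in_set subsetD)
  have "is_path E (pi (par x) @ [x])" using pi_prop[OF assms(1)] \<open>pi x = pi (par x) @ [x]\<close> by simp
  then show "adj E (par x) x" using pp \<open>butlast (pi x) \<noteq> []\<close>
    by (auto simp: is_path_walk walk_def successively_append_iff par_def)
qed

lemma pi_last_in: "x \<in> V \<Longrightarrow> x \<in> set (pi x)"
  using pi_prop[of x] pi_ne[of x] last_in_set by metis

lemma par_in_pi: assumes "x \<in> V" "x \<noteq> v" shows "par x \<in> set (pi x)"
proof -
  have "par x \<in> set (pi (par x))" using pi_last_in pi_par(2)[OF assms] by blast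
  then show ?thesis using pi_par(1)[OF assms] by simp
qed

lemma len_par: "x \<in> V \<Longrightarrow> x \<noteq> v \<Longrightarrow> length (pi x) = Suc (length (pi (par x)))"
  using pi_par by simp

lemma adj_in_pi: assumes u: "u \<in> V" and a: "adj E w u" and w: "w \<in> set (pi u)"
  shows "u \<noteq> v \<and> par u = w"
proof -
  have "u \<noteq> v" using a w pi_v by (auto simp: adj_def)
  have wu: "w \<noteq> u" using a by (simp add: adj_def)
  have wp: "w \<in> set (pi (par u))" using w pi_par[OF u \<open>u \<noteq> v\<close>] wu by auto
  have pV: "par u \<in> V" using pi_par[OF u \<open>u \<noteq> v\<close>] by simp
  obtain b where b: "pi (par u) = pi w @ b" using pi_split[OF pV wp] by blast
  show ?thesis
  proof (cases "b = []")
    case True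
    then have "pi (par u) = pi w" using b by simp
    then have "par u = w" using pi_prop[OF pV] pi_prop[of w] pi_set[OF pV] wp
      by (metis subsetD)
    then show ?thesis using \<open>u \<noteq> v\<close> by simp
  next
    case False
    have wV: "w \<in> V" using pi_set[OF pV] wp by blast
    have d: "distinct (pi u)" using pi_prop[OF u] by (simp add: is_path_def)
    have "u \<notin> set (pi (par u))" using d pi_par[OF u \<open>u \<noteq> v\<close>] by (metis distinct_append not_distinct_conv_prefix)
    then have "u \<notin> set (pi w)" using b by auto
    then have "is_path E (pi w @ [u])" using pi_prop[OF wV] a pi_ne[OF wV]
      by (auto simp: is_path_walk walk_def successively_append_iff)
    then have "pi u = pi w @ [u]" using pi_prop[OF wV] pi_ne[OF wV] by (intro pi_eq) auto
    then have "length (pi u) = Suc (length (pi w))" by simp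
    moreover have "length (pi u) = Suc (length (pi w) + length b)"
      using pi_par[OF u \<open>u \<noteq> v\<close>] b by simp
    ultimately show ?thesis using False by simp
  qed
qed

definition ch :: "'a \<Rightarrow> 'a set" where "ch w = {u \<in> V. u \<noteq> v \<and> par u = w}"

lemma children_eq: "children V E v w = ch w"
proof (rule set_eqI, rule iffI)
  fix u assume "u \<in> children V E v w"
  then obtain p where u: "u \<in> V" "adj E w u" "is_path E p" "hd p = v" "last p = u" "w \<in> set p"
    unfolding children_def by blast
  then have "p = pi u" using pi_eq by metis
  then show "u \<in> ch w" using adj_in_pi[of u w] u unfolding ch_def by auto
next
  fix u assume "u \<in> ch w"
  then have u: "u \<in> V" "u \<noteq> v" "par u = w" unfolding ch_def by auto
  have "is_path E (pi u) \<and> set (pi u) \<subseteq> V \<and> hd (pi u) = v \<and> last (pi u) = u \<and> w \<in> set (pi u)"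
    using pi_prop[OF u(1)] pi_set[OF u(1)] par_in_pi[OF u(1,2)] u(3) by auto
  then show "u \<in> children V E v w" unfolding children_def
    using pi_par(3)[OF u(1,2)] u by blast
qed

lemma neighbors: assumes x: "x \<in> V" and a: "adj E x y"
  shows "(x \<noteq> v \<and> y = par x) \<or> y \<in> ch x"
proof (cases "x \<in> set (pi y)")
  case True
  have y: "y \<in> V" using graph_adj[OF graphVE a] by simp
  then show ?thesis using adj_in_pi[OF y a True] unfolding ch_def by auto
next
  case False
  have y: "y \<in> V" using graph_adj[OF graphVE a] by simp
  have "is_path E (pi y @ [x])" using pi_prop[OF y] a False pi_ne[OF y]
    by (auto simp: is_path_walk walk_def successively_append_iff adj_sym)
  then have px: "pi x = pi y @ [x]" using pi_prop[OF y] pi_ne[OF y] by (intro pi_eq) auto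
  have "x \<noteq> v"
  proof
    assume "x = v"
    then have "pi y @ [x] = [v]" using px pi_v by simp
    then show False using pi_ne[OF y] by (cases "pi y") auto
  qed
  moreover have "par x = y" unfolding par_def px using pi_prop[OF y] by simp
  ultimately show ?thesis by simp
qed

definition D :: "'a \<Rightarrow> 'a set" where "D w = {x \<in> V. w \<in> set (pi x)}"

lemma D_sub: "D w \<subseteq> V" unfolding D_def by auto

lemma D_self: "w \<in> V \<Longrightarrow> w \<in> D w"
  unfolding D_def using pi_last_in by blast

lemma D_v: "D v = V"
proof -
  have "v \<in> set (pi x)" if x: "x \<in> V" for x
  proof -
    have "hd (pi x) \<in> set (pi x)" using pi_ne[OF x] by (rule hd_in_set)
    then show ?thesis using pi_prop[OF x] by simp
  qed
  then show ?thesis unfolding D_def by auto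
qed

lemma D_pi: "x \<in> D w \<Longrightarrow> \<exists>b. pi x = pi w @ b"
  unfolding D_def using pi_split by blast

lemma D_V: "x \<in> D w \<Longrightarrow> w \<in> V"
  unfolding D_def using pi_set by blast

lemma pi_antisym: "x \<in> V \<Longrightarrow> y \<in> V \<Longrightarrow> pi x = pi y @ b \<Longrightarrow> pi y = pi x @ c \<Longrightarrow> x = y"
proof -
  assume a: "x \<in> V" "y \<in> V" "pi x = pi y @ b" "pi y = pi x @ c"
  then have "pi x = pi x @ (c @ b)" by simp
  then have "c @ b = []" by (rule self_append_conv[THEN iffD1])
  then have "pi y = pi x" using a(4) by simp
  then show ?thesis using pi_prop[OF a(1)] pi_prop[OF a(2)] by metis
qed

lemma anc_not_D: assumes "w \<in> V" "y \<in> set (pi w)" "y \<noteq> w" shows "y \<notin> D w"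
proof
  assume "y \<in> D w"
  then obtain c where c: "pi y = pi w @ c" using D_pi by blast
  obtain b where b: "pi w = pi y @ b" using pi_split assms by blast
  have "y \<in> V" using pi_set assms by blast
  then show False using pi_antisym[OF assms(1) \<open>y \<in> V\<close> b c] assms(3) by simp
qed

lemma par_not_D: "w \<in> V \<Longrightarrow> w \<noteq> v \<Longrightarrow> par w \<notin> D w"
proof -
  assume a: "w \<in> V" "w \<noteq> v"
  have "par w \<noteq> w"
  proof
    assume "par w = w"
    then have "pi w = pi w @ [w]" using pi_par(1)[OF a] by simp
    then show False by simp
  qed
  then show ?thesis using anc_not_D[OF a(1) par_in_pi[OF a]] by blast
qed

lemma ch_pi: "u \<in> ch w \<Longrightarrow> pi u = pi w @ [u]"
  unfolding ch_def using pi_par by auto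

lemma ch_V: "u \<in> ch w \<Longrightarrow> u \<in> V \<and> w \<in> V"
  unfolding ch_def using pi_par by auto

lemma ch_D: "u \<in> ch w \<Longrightarrow> D u \<subseteq> D w - {w}"
proof
  fix x assume u: "u \<in> ch w" and x: "x \<in> D u"
  obtain b where b: "pi x = pi u @ b" using D_pi[OF x] by blast
  then have b2: "pi x = pi w @ u # b" using ch_pi[OF u] by simp
  have "x \<in> V" using x D_sub by blast
  moreover have "w \<in> set (pi x)" using b2 pi_last_in ch_V[OF u] by auto
  moreover have "x \<noteq> w"
  proof
    assume "x = w"
    then have "length (pi x) = length (pi w @ u # b)" using b2 by simp
    then show False using \<open>x = w\<close> by simp
  qed
  ultimately show "x \<in> D w - {w}" unfolding D_def by auto
qed

lemma D_ch: assumes x: "x \<in> D w" and xw: "x \<noteq> w" shows "\<exists>u\<in>ch w. x \<in> D u"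
proof -
  obtain b where b: "pi x = pi w @ b" using D_pi[OF x] by blast
  have xV: "x \<in> V" and wV: "w \<in> V" using x D_sub D_V by auto
  have "b \<noteq> []" using b xw pi_prop[OF xV] pi_prop[OF wV] by auto
  then obtain u b' where ub: "b = u # b'" by (cases b) auto
  have pu: "pi u = pi w @ [u]" using pi_prefix[OF xV, of "pi w @ [u]" b'] b ub by simp
  have uV: "u \<in> V" using pi_set[OF xV] b ub by auto
  have "u \<noteq> v"
  proof
    assume "u = v"
    then have "pi w @ [u] = [v]" using pu pi_v by simp
    then show False using pi_ne[OF wV] by (cases "pi w") auto
  qed
  moreover have "par u = w" unfolding par_def pu using pi_prop[OF wV] by simp
  moreover have "x \<in> D u" unfolding D_def using xV b ub by simp
  ultimately show ?thesis unfolding ch_def using uV by blast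
qed

lemma D_disj: assumes "u \<in> ch w" "u' \<in> ch w" "x \<in> D u" "x \<in> D u'" shows "u = u'"
proof -
  obtain b where b: "pi x = pi u @ b" using D_pi assms by blast
  obtain b' where b': "pi x = pi u' @ b'" using D_pi assms by blast
  have "length (pi u) = length (pi u')" using ch_pi assms(1,2) by simp
  then have "pi u = pi u'" using b b' by (simp add: append_eq_append_conv)
  then show ?thesis using ch_pi[OF assms(1)] ch_pi[OF assms(2)] by simp
qed

lemma fin_ch: "finite (ch w)" using finV unfolding ch_def by simp

lemma len_pi_le: "x \<in> V \<Longrightarrow> length (pi x) \<le> card V"
proof -
  assume x: "x \<in> V"
  have "length (pi x) = card (set (pi x))" using pi_prop[OF x] by (simp add: is_path_def distinct_card)
  also have "\<dots> \<le> card V" using pi_set[OF x] finV by (rule card_mono[rotated])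
  finally show ?thesis .
qed

lemma tree_induct:
  assumes "\<And>w. w \<in> V \<Longrightarrow> (\<And>u. u \<in> ch w \<Longrightarrow> P u) \<Longrightarrow> P w"
  shows "w \<in> V \<Longrightarrow> P w"
proof (induction "card V - length (pi w)" arbitrary: w rule: less_induct)
  case less
  show ?case
  proof (rule assms[OF less.prems])
    fix u assume u: "u \<in> ch w"
    have "length (pi u) = Suc (length (pi w))" using ch_pi[OF u] by simp
    moreover have "length (pi u) \<le> card V" using len_pi_le ch_V[OF u] by blast
    then have "card V - length (pi u) < card V - length (pi w)" using \<open>length (pi u) = Suc (length (pi w))\<close>
      by simp
    then show "P u" using less.hyps ch_V[OF u] by blast
  qed
qed

end


lemma rev_sorted_mono:
  assumes "sorted xs" "i \<le> j" "j < length xs"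
  shows "rev xs ! j \<le> rev xs ! i"
  using assms by (simp add: rev_nth sorted_nth_mono)

lemma cnt_filter:
  assumes "finite C"
  shows "length (filter P (rev (sorted_list_of_multiset (image_mset g (mset_set C))))) = card {x\<in>C. P (g x)}"
proof -
  have "length (filter P (rev (sorted_list_of_multiset (image_mset g (mset_set C)))))
      = size (mset (filter P (rev (sorted_list_of_multiset (image_mset g (mset_set C))))))"
    by (simp only: size_mset)
  also have "\<dots> = size (filter_mset P (image_mset g (mset_set C)))" by simp
  also have "\<dots> = card {x\<in>C. P (g x)}" using assms by (simp add: filter_mset_image_mset)
  finally show ?thesis .
qed

lemma len_cs: "finite C \<Longrightarrow> length (rev (sorted_list_of_multiset (image_mset g (mset_set C)))) = card C"
  using cnt_filter[of C "\<lambda>_. True" g] by simp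

lemma S1:
  assumes "sorted xs" "i < length xs"
  shows "Suc i \<le> length (filter (\<lambda>y. rev xs ! i \<le> y) (rev xs))"
proof -
  let ?cs = "rev xs" and ?P = "\<lambda>y. rev xs ! i \<le> y"
  have all: "\<forall>y\<in>set (take (Suc i) ?cs). ?P y"
  proof
    fix y assume "y \<in> set (take (Suc i) ?cs)"
    then obtain j where j: "j < length (take (Suc i) ?cs)" "y = take (Suc i) ?cs ! j"
      by (auto simp: in_set_conv_nth)
    then have "j \<le> i" "y = ?cs ! j" by auto
    then show "?P y" using rev_sorted_mono[OF assms(1), of j i] assms(2) by simp
  qed
  then have "filter ?P (take (Suc i) ?cs) = take (Suc i) ?cs" by simp
  moreover have "length (take (Suc i) ?cs) = Suc i" using assms(2) by simp
  moreover have "length (filter ?P ?cs) = length (filter ?P (take (Suc i) ?cs)) + length (filter ?P (drop (Suc i) ?cs))"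
    by (metis append_take_drop_id filter_append length_append)
  ultimately show ?thesis by simp
qed

lemma S2:
  assumes "sorted xs" "k < length xs" "rev xs ! k < t"
  shows "length (filter (\<lambda>y. t \<le> y) (rev xs)) \<le> k"
proof -
  let ?cs = "rev xs" and ?P = "\<lambda>y. t \<le> y"
  have none: "\<forall>y\<in>set (drop k ?cs). \<not> ?P y"
  proof
    fix y assume "y \<in> set (drop k ?cs)"
    then obtain j where j: "j < length (drop k ?cs)" "y = drop k ?cs ! j"
      by (auto simp: in_set_conv_nth)
    then have "y = ?cs ! (k + j)" "k + j < length xs" by auto
    then show "\<not> ?P y" using rev_sorted_mono[OF assms(1), of k "k+j"] assms(3) by simp
  qed
  then have "filter ?P (drop k ?cs) = []" by (simp add: filter_empty_conv)
  moreover have "length (filter ?P ?cs) = length (filter ?P (take k ?cs)) + length (filter ?P (drop k ?cs))"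
    by (metis append_take_drop_id filter_append length_append)
  moreover have "length (filter ?P (take k ?cs)) \<le> k"
    by (metis length_filter_le length_take min.bounded_iff order.refl)
  ultimately show ?thesis by simp
qed

lemma f_step_alt:
  assumes fin: "finite C" and ne: "C \<noteq> {}"
  shows "f_step g C = Max {card S - 1 + Min (g ` S) | S. S \<subseteq> C \<and> S \<noteq> {}}"
proof -
  define xs where "xs = sorted_list_of_multiset (image_mset g (mset_set C))"
  define cs where "cs = rev xs"
  have sx: "sorted xs" unfolding xs_def by simp
  have lcs: "length cs = card C" unfolding cs_def xs_def using len_cs[OF fin] by simp
  have cnt: "\<And>P. length (filter P cs) = card {x\<in>C. P (g x)}"
    unfolding cs_def xs_def using cnt_filter[OF fin] by blast
  have fs: "f_step g C = Max {i + cs ! i | i. i < length cs}"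
    using ne unfolding f_step_def cs_def xs_def by (simp add: Let_def)
  let ?A = "{i + cs ! i | i. i < length cs}"
  let ?B = "{card S - 1 + Min (g ` S) | S. S \<subseteq> C \<and> S \<noteq> {}}"
  have finA: "finite ?A" by simp
  have finB: "finite ?B"
  proof -
    have "?B = (\<lambda>S. card S - 1 + Min (g ` S)) ` {S. S \<subseteq> C \<and> S \<noteq> {}}" by auto
    then show ?thesis using fin by simp
  qed
  have AB: "\<forall>a\<in>?A. \<exists>b\<in>?B. a \<le> b"
  proof
    fix a assume "a \<in> ?A"
    then obtain i where i: "i < length cs" "a = i + cs ! i" by blast
    define S where "S = {x\<in>C. cs ! i \<le> g x}"
    have "Suc i \<le> length (filter (\<lambda>y. cs ! i \<le> y) cs)"
      using S1[OF sx, of i] i(1) unfolding cs_def by simp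
    then have cS: "Suc i \<le> card S" unfolding S_def using cnt by simp
    have finS: "finite S" unfolding S_def using fin by simp
    then have Sne: "S \<noteq> {}" using cS by auto
    have "cs ! i \<le> Min (g ` S)" using finS Sne unfolding S_def by simp
    then have "a \<le> card S - 1 + Min (g ` S)" using i(2) cS by simp
    moreover have "card S - 1 + Min (g ` S) \<in> ?B" using Sne unfolding S_def by blast
    ultimately show "\<exists>b\<in>?B. a \<le> b" by blast
  qed
  have BA: "\<forall>b\<in>?B. \<exists>a\<in>?A. b \<le> a"
  proof
    fix b assume "b \<in> ?B"
    then obtain S where S: "S \<subseteq> C" "S \<noteq> {}" "b = card S - 1 + Min (g ` S)" by blast
    define k where "k = card S - 1"
    define m where "m = Min (g ` S)"
    have finS: "finite S" using S fin finite_subset by blast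
    have cS: "card S = Suc k" unfolding k_def using finS S(2) by (simp add: card_gt_0_iff)
    have kl: "k < length cs" using lcs card_mono[OF fin S(1)] cS by simp
    have "m \<le> cs ! k"
    proof (rule ccontr)
      assume "\<not> m \<le> cs ! k"
      then have "length (filter (\<lambda>y. m \<le> y) cs) \<le> k"
        using S2[OF sx, of k m] kl unfolding cs_def by simp
      then have "card {x\<in>C. m \<le> g x} \<le> k" using cnt by simp
      moreover have "S \<subseteq> {x\<in>C. m \<le> g x}" using S finS unfolding m_def by auto
      then have "card S \<le> card {x\<in>C. m \<le> g x}" using fin by (intro card_mono) auto
      ultimately show False using cS by simp
    qed
    then have "b \<le> k + cs ! k" using S(3) unfolding k_def m_def by simp
    then show "\<exists>a\<in>?A. b \<le> a" using kl by blast
  qed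
  show ?thesis unfolding fs using Max_eq_if[OF finA finB AB BA] .
qed


lemma is_path_suffix: "is_path E (a @ b) \<Longrightarrow> b \<noteq> [] \<Longrightarrow> is_path E b"
  by (auto simp: is_path_walk walk_def successively_append_iff)

lemma adj_mono: "ES \<subseteq> E \<Longrightarrow> adj ES x y \<Longrightarrow> adj E x y"
  unfolding adj_def by blast

lemma is_path_mono: assumes "ES \<subseteq> E" "is_path ES p" shows "is_path E p"
  using assms(2) unfolding is_path_def by (auto intro: adj_mono[OF assms(1)])

context rtree begin

definition subt :: "'a \<Rightarrow> 'a set set" where
  "subt w = {VS. w \<in> VS \<and> VS \<subseteq> D w \<and> (\<forall>x\<in>VS. x \<noteq> w \<longrightarrow> par x \<in> VS)}"

definition Eind :: "'a set \<Rightarrow> 'a set set" where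
  "Eind VS = {e \<in> E. e \<subseteq> VS}"

definition seg :: "'a \<Rightarrow> 'a \<Rightarrow> 'a list" where
  "seg w l = w # drop (length (pi w)) (pi l)"

definition leaves :: "'a set \<Rightarrow> 'a set" where
  "leaves VS = {l \<in> VS. ch l \<inter> VS = {}}"

lemma D_trans: "x \<in> D l \<Longrightarrow> l \<in> D u \<Longrightarrow> x \<in> D u"
proof -
  assume x: "x \<in> D l" and l: "l \<in> D u"
  obtain b where "pi x = pi l @ b" using D_pi[OF x] by blast
  moreover have "u \<in> set (pi l)" using l unfolding D_def by simp
  ultimately show ?thesis using x unfolding D_def by simp
qed

lemma ch_in_D: "c \<in> ch l \<Longrightarrow> c \<in> D l"
proof -
  assume c: "c \<in> ch l"
  have "l \<in> set (pi c)" using ch_pi[OF c] ch_V[OF c] pi_last_in by simp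
  then show ?thesis unfolding D_def using ch_V[OF c] by simp
qed

lemma ch_neq: "c \<in> ch l \<Longrightarrow> c \<noteq> l"
proof
  assume c: "c \<in> ch l" and "c = l"
  then have "pi c = pi c @ [c]" using ch_pi[OF c] by simp
  then show False by simp
qed

lemma seg_self: "w \<in> V \<Longrightarrow> seg w w = [w]"
  unfolding seg_def by simp

lemma D_notv: assumes "l \<in> D w" "l \<noteq> w" shows "l \<noteq> v"
proof
  assume "l = v"
  then have "w \<in> set (pi v)" using assms unfolding D_def by simp
  then show False using pi_v assms \<open>l = v\<close> by simp
qed

lemma seg_rec: assumes l: "l \<in> D w" and lw: "l \<noteq> w"
  shows "l \<noteq> v" "par l \<in> D w" "seg w l = seg w (par l) @ [l]"
proof -
  show lv: "l \<noteq> v" using D_notv[OF l lw] .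
  have lV: "l \<in> V" using l D_sub by blast
  have wV: "w \<in> V" using D_V[OF l] .
  obtain b where b: "pi l = pi w @ b" using D_pi[OF l] by blast
  have pl: "pi l = pi (par l) @ [l]" using pi_par[OF lV lv] by simp
  have "b \<noteq> []" using b lw pi_prop[OF lV] pi_prop[OF wV] by auto
  then have pp: "pi (par l) = pi w @ butlast b" using b pl
    by (metis append_butlast_last_id butlast_append butlast_snoc)
  have "w \<in> set (pi w)" using pi_last_in[OF wV] .
  then have "w \<in> set (pi (par l))" using pp by simp
  then show "par l \<in> D w" unfolding D_def using pi_par(2)[OF lV lv] by simp
  have "length (pi w) \<le> length (pi (par l))" using pp by simp
  then show "seg w l = seg w (par l) @ [l]" unfolding seg_def pl by simp
qed

lemma subt_induct:
  assumes VS: "VS \<in> subt w" and base: "P w"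
    and step: "\<And>x. x \<in> VS \<Longrightarrow> x \<noteq> w \<Longrightarrow> P (par x) \<Longrightarrow> P x"
  shows "x \<in> VS \<Longrightarrow> P x"
proof (induction "length (pi x)" arbitrary: x rule: less_induct)
  case less
  show ?case
  proof (cases "x = w")
    case True then show ?thesis using base by simp
  next
    case False
    have xD: "x \<in> D w" using less.prems VS unfolding subt_def by blast
    have xv: "x \<noteq> v" using seg_rec(1)[OF xD False] .
    have xV: "x \<in> V" using xD D_sub by blast
    have pVS: "par x \<in> VS" using VS less.prems False unfolding subt_def by blast
    have "length (pi (par x)) < length (pi x)" using len_par[OF xV xv] by simp
    then have "P (par x)" using less.hyps pVS by blast
    then show ?thesis using step less.prems False by blast
  qed
qed

lemma subt_D: "VS \<in> subt w \<Longrightarrow> VS \<subseteq> D w" unfolding subt_def by blast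
lemma subt_w: "VS \<in> subt w \<Longrightarrow> w \<in> VS" unfolding subt_def by blast
lemma subt_par: "VS \<in> subt w \<Longrightarrow> x \<in> VS \<Longrightarrow> x \<noteq> w \<Longrightarrow> par x \<in> VS" unfolding subt_def by blast
lemma subt_wV: "VS \<in> subt w \<Longrightarrow> w \<in> V" using subt_D subt_w D_V by blast

lemma anc_closed:
  assumes VS: "VS \<in> subt w" and x: "x \<in> VS" and u: "u \<in> set (pi x)" "u \<in> D w"
  shows "u \<in> VS"
proof -
  have "u \<in> set (pi x) \<longrightarrow> u \<in> VS"
  proof (rule subt_induct[OF VS, where P = "\<lambda>x. u \<in> set (pi x) \<longrightarrow> u \<in> VS"])
    show "x \<in> VS" using x .
    show "u \<in> set (pi w) \<longrightarrow> u \<in> VS"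
    proof
      assume "u \<in> set (pi w)"
      then have "u = w" using anc_not_D[OF subt_wV[OF VS]] u(2) by blast
      then show "u \<in> VS" using subt_w[OF VS] by simp
    qed
    fix y assume y: "y \<in> VS" "y \<noteq> w" and IH: "u \<in> set (pi (par y)) \<longrightarrow> u \<in> VS"
    show "u \<in> set (pi y) \<longrightarrow> u \<in> VS"
    proof
      assume uy: "u \<in> set (pi y)"
      have yD: "y \<in> D w" using y subt_D[OF VS] by blast
      have yv: "y \<noteq> v" using seg_rec(1)[OF yD y(2)] .
      have yV: "y \<in> V" using yD D_sub by blast
      show "u \<in> VS"
      proof (cases "u = y")
        case True then show ?thesis using y by simp
      next
        case False
        then have "u \<in> set (pi (par y))" using uy pi_par(1)[OF yV yv] by simp
        then show ?thesis using IH by blast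
      qed
    qed
  qed
  then show ?thesis using u by blast
qed

lemma seg_in_VS:
  assumes VS: "VS \<in> subt w" and l: "l \<in> VS"
  shows "set (seg w l) \<subseteq> VS \<and> is_path E (seg w l) \<and> hd (seg w l) = w \<and> last (seg w l) = l"
proof (rule subt_induct[OF VS, where P = "\<lambda>l. set (seg w l) \<subseteq> VS \<and> is_path E (seg w l) \<and> hd (seg w l) = w \<and> last (seg w l) = l"])
  show "l \<in> VS" using l .
  show "set (seg w w) \<subseteq> VS \<and> is_path E (seg w w) \<and> hd (seg w w) = w \<and> last (seg w w) = w"
    using seg_self[OF subt_wV[OF VS]] subt_w[OF VS] by (simp add: is_path_def)
  fix x assume x: "x \<in> VS" "x \<noteq> w"
    and IH: "set (seg w (par x)) \<subseteq> VS \<and> is_path E (seg w (par x)) \<and> hd (seg w (par x)) = w \<and> last (seg w (par x)) = par x"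
  have xD: "x \<in> D w" using x subt_D[OF VS] by blast
  have xv: "x \<noteq> v" using seg_rec(1)[OF xD x(2)] .
  have xV: "x \<in> V" using xD D_sub by blast
  have sx: "seg w x = seg w (par x) @ [x]" using seg_rec(3)[OF xD x(2)] .
  have pxD: "par x \<in> D w" using seg_rec(2)[OF xD x(2)] .
  have "set (seg w (par x)) \<subseteq> set (pi (par x))"
  proof -
    have "w \<in> set (pi (par x))" using pxD unfolding D_def by simp
    then show ?thesis unfolding seg_def by (auto dest: in_set_dropD)
  qed
  moreover have "x \<notin> set (pi (par x))"
    using pi_prop[OF xV] pi_par(1)[OF xV xv] by (auto simp: is_path_def)
  ultimately have xn: "x \<notin> set (seg w (par x))" by blast
  have adj: "adj E (par x) x" using pi_par(3)[OF xV xv] .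
  have ne: "seg w (par x) \<noteq> []" unfolding seg_def by simp
  have "is_path E (seg w (par x) @ [x])"
    using IH xn adj ne by (auto simp: is_path_walk walk_def successively_append_iff)
  then show "set (seg w x) \<subseteq> VS \<and> is_path E (seg w x) \<and> hd (seg w x) = w \<and> last (seg w x) = x"
    using sx IH x ne by auto
qed

lemma is_path_Eind: "is_path E p \<Longrightarrow> set p \<subseteq> VS \<Longrightarrow> is_path (Eind VS) p"
  unfolding is_path_def Eind_def adj_def
  by (auto simp: Suc_lessD)

lemma D_pi_seg: assumes "l \<in> D w" shows "pi l = butlast (pi w) @ seg w l"
proof -
  obtain b where b: "pi l = pi w @ b" using D_pi[OF assms] by blast
  have wV: "w \<in> V" using D_V[OF assms] .
  have "pi w = butlast (pi w) @ [w]" using pi_prop[OF wV] pi_ne[OF wV] by (metis append_butlast_last_id)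
  have s: "seg w l = w # b" unfolding seg_def b by simp
  have "butlast (pi w) @ seg w l = (butlast (pi w) @ [w]) @ b" unfolding s by simp
  also have "\<dots> = pi l" using b \<open>pi w = butlast (pi w) @ [w]\<close> by simp
  finally show ?thesis by simp
qed

end


lemma path_edges_snoc: "path_edges p \<subseteq> path_edges (p @ [c])"
  unfolding path_edges_def by (force simp: nth_append)

context rtree begin

lemma Eind_sub: "Eind VS \<subseteq> E" unfolding Eind_def by blast

lemma seg_sub_pi: "l \<in> D w \<Longrightarrow> set (seg w l) \<subseteq> set (pi l)"
  using D_pi_seg by (metis set_append sup_ge2)

lemma path_from_char:
  assumes VS: "VS \<in> subt w"
  shows "path_from VS (Eind VS) w p \<longleftrightarrow> (\<exists>l\<in>VS. p = seg w l)"
proof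
  assume "\<exists>l\<in>VS. p = seg w l"
  then obtain l where l: "l \<in> VS" "p = seg w l" by blast
  show "path_from VS (Eind VS) w p"
    using seg_in_VS[OF VS l(1)] l(2) is_path_Eind unfolding path_from_def by blast
next
  assume pf: "path_from VS (Eind VS) w p"
  then have pp: "is_path (Eind VS) p" "set p \<subseteq> VS" "hd p = w" unfolding path_from_def by auto
  have pE: "is_path E p" using is_path_mono[OF Eind_sub pp(1)] .
  have pne: "p \<noteq> []" using pp(1) by (simp add: is_path_def)
  define l where "l = last p"
  have lVS: "l \<in> VS" using pp(2) pne unfolding l_def by auto
  have lD: "l \<in> D w" using lVS subt_D[OF VS] by blast
  have wV: "w \<in> V" using subt_wV[OF VS] .
  have pw: "pi w = butlast (pi w) @ [w]" using pi_prop[OF wV] pi_ne[OF wV] by (metis append_butlast_last_id)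
  have p2: "p = w # tl p" using pne pp(3) by (cases p) auto
  define q where "q = pi w @ tl p"
  have q2: "q = butlast (pi w) @ p" unfolding q_def using pw p2 by (metis append.assoc append_Cons append_Nil)
  have wq: "walk E q" unfolding q_def
    using pi_prop[OF wV] pE pp(3) by (intro walk_append) (auto simp: is_path_walk)
  have dq: "distinct q"
  proof -
    have d1: "distinct (butlast (pi w) @ [w])" using pw pi_prop[OF wV] by (metis is_path_def)
    have "set (butlast (pi w)) \<inter> set p = {}"
    proof (rule ccontr)
      assume "set (butlast (pi w)) \<inter> set p \<noteq> {}"
      then obtain y where y: "y \<in> set (butlast (pi w))" "y \<in> set p" by blast
      have "y \<noteq> w" using d1 y(1) by auto
      moreover have "y \<in> set (pi w)" using y(1) pw by (metis in_set_butlastD)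
      ultimately have "y \<notin> D w" using anc_not_D[OF wV] by blast
      moreover have "y \<in> D w" using y(2) pp(2) subt_D[OF VS] by blast
      ultimately show False by blast
    qed
    then show ?thesis unfolding q2 using d1 pE by (simp add: is_path_def)
  qed
  have hq: "hd q = v" unfolding q_def using pi_prop[OF wV] pi_ne[OF wV] by simp
  have lq: "last q = l"
  proof (cases "tl p = []")
    case True
    then have "p = [w]" using p2 by simp
    then show ?thesis unfolding q_def l_def using True pi_prop[OF wV] by simp
  next
    case False
    then show ?thesis unfolding q_def l_def using p2 by (metis last_ConsR last_appendR)
  qed
  have "pi l = q" using wq dq hq lq by (intro pi_eq) (auto simp: is_path_walk)
  then have "butlast (pi w) @ p = butlast (pi w) @ seg w l" using D_pi_seg[OF lD] q2 by simp
  then have "p = seg w l" by simp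
  then show "\<exists>l\<in>VS. p = seg w l" using lVS by blast
qed

lemma maxp_char:
  assumes VS: "VS \<in> subt w"
  shows "max_paths VS (Eind VS) w = seg w ` leaves VS"
proof (rule set_eqI, rule iffI)
  fix p assume pm: "p \<in> max_paths VS (Eind VS) w"
  then have pf: "path_from VS (Eind VS) w p" unfolding max_paths_def by blast
  then obtain l where l: "l \<in> VS" "p = seg w l" using path_from_char[OF VS] by blast
  have "l \<in> leaves VS"
  proof (rule ccontr)
    assume "l \<notin> leaves VS"
    then obtain c where c: "c \<in> ch l" "c \<in> VS" using l unfolding leaves_def by blast
    have lD: "l \<in> D w" using l subt_D[OF VS] by blast
    have cD: "c \<in> D w" using c subt_D[OF VS] by blast
    have pc: "par c = l" "c \<noteq> v" "c \<in> V" using c unfolding ch_def by auto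
    have cw: "c \<noteq> w"
    proof
      assume "c = w"
      then have "par w \<in> D w" using pc lD by simp
      then show False using par_not_D[OF pc(3)] pc(2) \<open>c = w\<close> by simp
    qed
    have sq: "seg w c = p @ [c]" using seg_rec(3)[OF cD cw] pc l by simp
    have qf: "path_from VS (Eind VS) w (seg w c)" using path_from_char[OF VS] c by blast
    have "c \<notin> set (pi l)" using ch_pi[OF c(1)] pi_prop[OF pc(3)] by (auto simp: is_path_def)
    then have "c \<notin> set p" using seg_sub_pi[OF lD] l by blast
    then have "set p \<noteq> set (seg w c)" using sq by auto
    moreover have "set p \<subseteq> set (seg w c)" "path_edges p \<subseteq> path_edges (seg w c)"
      using sq path_edges_snoc[of p c] by auto
    ultimately show False using pm qf unfolding max_paths_def by blast
  qed
  then show "p \<in> seg w ` leaves VS" using l by blast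
next
  fix p assume "p \<in> seg w ` leaves VS"
  then obtain l where l: "l \<in> leaves VS" "p = seg w l" by blast
  have lVS: "l \<in> VS" using l unfolding leaves_def by blast
  have lD: "l \<in> D w" using lVS subt_D[OF VS] by blast
  have lV: "l \<in> V" using lD D_sub by blast
  have pf: "path_from VS (Eind VS) w p" using path_from_char[OF VS] lVS l by blast
  have nq: "\<not> (path_from VS (Eind VS) w q \<and> set p \<subseteq> set q \<and> set p \<noteq> set q)" for q
  proof
    assume a: "path_from VS (Eind VS) w q \<and> set p \<subseteq> set q \<and> set p \<noteq> set q"
    then obtain m where m: "m \<in> VS" "q = seg w m" using path_from_char[OF VS] by blast
    have mD: "m \<in> D w" using m subt_D[OF VS] by blast
    have mV: "m \<in> V" using mD D_sub by blast
    have "l \<in> set p" using seg_in_VS[OF VS lVS] l pi_ne by (metis last_in_set list.distinct(1) seg_def)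
    then have "l \<in> set (pi m)" using a m seg_sub_pi[OF mD] by blast
    then obtain b where b: "pi m = pi l @ b" using pi_split[OF mV] by blast
    show False
    proof (cases b)
      case Nil
      then have "pi m = pi l" using b by simp
      then have "m = l" using pi_prop[OF mV] pi_prop[OF lV] by metis
      then show False using a m l by simp
    next
      case (Cons c b')
      have pcl: "pi c = pi l @ [c]" using pi_prefix[OF mV, of "pi l @ [c]" b'] b Cons by simp
      have cV: "c \<in> V" using pi_set[OF mV] b Cons by auto
      have cv: "c \<noteq> v"
      proof
        assume "c = v"
        then have "pi l @ [c] = [v]" using pcl pi_v by simp
        then show False using pi_ne[OF lV] by (cases "pi l") auto
      qed
      have "par c = l" unfolding par_def pcl using pi_prop[OF lV] by simp
      then have cch: "c \<in> ch l" unfolding ch_def using cV cv by simp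
      have "w \<in> set (pi c)" using pcl lD unfolding D_def by simp
      then have cD: "c \<in> D w" unfolding D_def using cV by simp
      have "c \<in> set (pi m)" using b Cons by simp
      then have "c \<in> VS" using anc_closed[OF VS m(1) _ cD] by blast
      then show False using l cch unfolding leaves_def by blast
    qed
  qed
  show "p \<in> max_paths VS (Eind VS) w" unfolding max_paths_def using pf nq by blast
qed

lemma deg_char:
  assumes VS: "VS \<in> subt w" and x: "x \<in> VS"
  shows "deg (Eind VS) x = card (ch x \<inter> VS) + (if x = w then 0 else 1)"
proof -
  define N where "N = {y \<in> VS. adj E x y}"
  have xD: "x \<in> D w" using x subt_D[OF VS] by blast
  have xV: "x \<in> V" using xD D_sub by blast
  have e1: "{e \<in> Eind VS. x \<in> e} = (\<lambda>y. {x, y}) ` N"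
  proof (rule set_eqI, rule iffI)
    fix e assume e: "e \<in> {e \<in> Eind VS. x \<in> e}"
    then have eE: "e \<in> E" "e \<subseteq> VS" "x \<in> e" unfolding Eind_def by auto
    obtain a b where ab: "a \<noteq> b" "e = {a, b}" using eE(1) graphVE unfolding graph_def by blast
    show "e \<in> (\<lambda>y. {x, y}) ` N"
    proof (cases "x = a")
      case True
      then have "b \<in> N" unfolding N_def adj_def using ab eE by auto
      then show ?thesis using ab True by blast
    next
      case False
      then have xb: "x = b" using ab eE by auto
      then have "a \<in> N" unfolding N_def adj_def using ab eE by (auto simp: insert_commute)
      then show ?thesis using ab xb by (auto simp: insert_commute)
    qed
  next
    fix e assume "e \<in> (\<lambda>y. {x, y}) ` N"
    then obtain y where "y \<in> N" "e = {x, y}" by blast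
    then show "e \<in> {e \<in> Eind VS. x \<in> e}" unfolding N_def Eind_def adj_def using x by auto
  qed
  have inj: "inj_on (\<lambda>y. {x, y}) N"
    unfolding inj_on_def N_def adj_def by (auto simp: doubleton_eq_iff)
  have N2: "N = (ch x \<inter> VS) \<union> (if x = w then {} else {par x})"
  proof (rule set_eqI, rule iffI)
    fix y assume "y \<in> N"
    then have y: "y \<in> VS" "adj E x y" unfolding N_def by auto
    have "(x \<noteq> v \<and> y = par x) \<or> y \<in> ch x" using neighbors[OF xV y(2)] .
    moreover have "\<not> (x = w \<and> x \<noteq> v \<and> y = par x)"
    proof
      assume a: "x = w \<and> x \<noteq> v \<and> y = par x"
      then have "par w \<in> D w" using y subt_D[OF VS] by blast
      then show False using par_not_D xV a by blast
    qed
    ultimately show "y \<in> (ch x \<inter> VS) \<union> (if x = w then {} else {par x})" using y by auto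
  next
    fix y assume y: "y \<in> (ch x \<inter> VS) \<union> (if x = w then {} else {par x})"
    show "y \<in> N"
    proof (cases "y \<in> ch x \<inter> VS")
      case True
      then have "adj E (par y) y" "par y = x" using pi_par[of y] unfolding ch_def by auto
      then show ?thesis using True unfolding N_def by (auto intro: adj_sym)
    next
      case False
      then have yx: "x \<noteq> w" "y = par x" using y by (auto split: if_splits)
      have xv: "x \<noteq> v" using seg_rec(1)[OF xD yx(1)] .
      have "adj E x (par x)" using pi_par(3)[OF xV xv] by (rule adj_sym)
      then have "adj E x y" using yx(2) by simp
      moreover have "y \<in> VS" using subt_par[OF VS x yx(1)] yx by simp
      ultimately show ?thesis unfolding N_def by simp
    qed
  qed
  have pnc: "x \<noteq> w \<Longrightarrow> par x \<notin> ch x"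
  proof
    assume xw: "x \<noteq> w" and pc: "par x \<in> ch x"
    have xv: "x \<noteq> v" using seg_rec(1)[OF xD xw] .
    have "par x \<in> D x" using ch_in_D[OF pc] .
    moreover have "par x \<noteq> x" using ch_neq[OF pc] by simp
    ultimately show False using anc_not_D[OF xV par_in_pi[OF xV xv]] by blast
  qed
  have "deg (Eind VS) x = card N" unfolding deg_def e1 using card_image[OF inj] .
  also have "\<dots> = card (ch x \<inter> VS) + (if x = w then 0 else 1)"
  proof (cases "x = w")
    case True then show ?thesis using N2 by simp
  next
    case False
    have "finite (ch x \<inter> VS)" using fin_ch by simp
    then show ?thesis using N2 False pnc by simp
  qed
  finally show ?thesis .
qed

end


lemma Min_UN:
  assumes C: "finite C" "C \<noteq> {}" and L: "\<And>u. u \<in> C \<Longrightarrow> finite (L u) \<and> L u \<noteq> {}"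
  shows "Min (f ` (\<Union>u\<in>C. L u)) = Min ((\<lambda>u. Min (f ` L u)) ` C)"
  (is "Min ?A = Min ?B")
proof (rule antisym)
  have fA: "finite ?A" using C L by auto
  have nA: "?A \<noteq> {}" using C L by auto
  have fB: "finite ?B" "?B \<noteq> {}" using C by auto
  show "Min ?A \<le> Min ?B"
  proof -
    have "\<forall>b\<in>?B. Min ?A \<le> b"
    proof
      fix b assume "b \<in> ?B"
      then obtain u where u: "u \<in> C" "b = Min (f ` L u)" by blast
      have "f ` L u \<subseteq> ?A" using u by blast
      then show "Min ?A \<le> b" using Min_antimono[of "f ` L u" ?A] u L[OF u(1)] fA by auto
    qed
    then show ?thesis using fB by simp
  qed
  show "Min ?B \<le> Min ?A"
  proof -
    have "Min ?A \<in> ?A" using fA nA by simp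
    then obtain u a where ua: "u \<in> C" "a \<in> L u" "Min ?A = f a" by blast
    have "Min ?B \<le> Min (f ` L u)" using ua fB by simp
    also have "\<dots> \<le> f a" using ua L[OF ua(1)] by simp
    finally show ?thesis using ua by simp
  qed
qed

lemma Min_shift:
  fixes g :: "'a \<Rightarrow> int"
  assumes "finite C" "C \<noteq> {}"
  shows "Min ((\<lambda>u. c + g u) ` C) = c + Min (g ` C)"
proof -
  have "mono (\<lambda>x::int. c + x)" by (rule monoI) simp
  then have "c + Min (g ` C) = Min ((\<lambda>x. c + x) ` g ` C)"
    using assms by (intro mono_Min_commute) auto
  then show ?thesis by (simp add: image_image)
qed

context rtree begin

definition mval :: "'a \<Rightarrow> 'a set \<Rightarrow> int" where
  "mval w VS = Min ((\<lambda>P. \<Sum>x\<in>set P. int (deg (Eind VS) x) - 2) ` max_paths VS (Eind VS) w)"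

definition tm :: "'a set \<Rightarrow> 'a \<Rightarrow> 'a \<Rightarrow> int" where
  "tm VS w x = int (card (ch x \<inter> VS)) + (if x = w then 0 else 1) - 2"

definition sig :: "'a set \<Rightarrow> 'a \<Rightarrow> 'a \<Rightarrow> int" where
  "sig VS w l = (\<Sum>x\<in>set (seg w l). tm VS w x)"

lemma mval_sig: assumes VS: "VS \<in> subt w" shows "mval w VS = Min (sig VS w ` leaves VS)"
proof -
  have "mval w VS = Min ((\<lambda>l. \<Sum>x\<in>set (seg w l). int (deg (Eind VS) x) - 2) ` leaves VS)"
    unfolding mval_def maxp_char[OF VS] image_image by simp
  also have "\<dots> = Min (sig VS w ` leaves VS)"
  proof -
    have "(\<Sum>x\<in>set (seg w l). int (deg (Eind VS) x) - 2) = sig VS w l" if l: "l \<in> leaves VS" for l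
    proof -
      have "l \<in> VS" using l unfolding leaves_def by blast
      then have "set (seg w l) \<subseteq> VS" using seg_in_VS[OF VS] by blast
      then show ?thesis unfolding sig_def tm_def using deg_char[OF VS] by (intro sum.cong) auto
    qed
    then show ?thesis by (metis (mono_tags, lifting) image_cong)
  qed
  finally show ?thesis .
qed

lemma subt_fin: "VS \<in> subt w \<Longrightarrow> finite VS"
  using subt_D D_sub finV finite_subset by metis

lemma finite_subt: "finite (subt w)"
proof -
  have "subt w \<subseteq> Pow V" using subt_D D_sub by blast
  then show ?thesis using finV finite_subset by blast
qed

lemma leaves_ne: assumes VS: "VS \<in> subt w" shows "leaves VS \<noteq> {}" "finite (leaves VS)"
proof -
  have fin: "finite VS" using subt_fin[OF VS] .
  show "finite (leaves VS)" using fin unfolding leaves_def by simp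
  have ne: "VS \<noteq> {}" using subt_w[OF VS] by blast
  define n where "n = Max ((\<lambda>x. length (pi x)) ` VS)"
  have "n \<in> (\<lambda>x. length (pi x)) ` VS" unfolding n_def using fin ne by simp
  then obtain l where l: "l \<in> VS" "length (pi l) = n" by blast
  have "ch l \<inter> VS = {}"
  proof (rule ccontr)
    assume "ch l \<inter> VS \<noteq> {}"
    then obtain c where c: "c \<in> ch l" "c \<in> VS" by blast
    have "length (pi c) \<le> n" unfolding n_def using fin c by simp
    moreover have "length (pi c) = Suc (length (pi l))" using ch_pi[OF c(1)] by simp
    ultimately show False using l by simp
  qed
  then show "leaves VS \<noteq> {}" using l unfolding leaves_def by blast
qed

lemma single_subt: "w \<in> V \<Longrightarrow> {w} \<in> subt w"
  unfolding subt_def using D_self by auto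

lemma mval_single: assumes wV: "w \<in> V" shows "mval w {w} = -2"
proof -
  have "leaves {w} = {w}" unfolding leaves_def using ch_neq by blast
  moreover have "sig {w} w w = -2" unfolding sig_def seg_self[OF wV] tm_def
    using ch_neq by (simp add: disjoint_iff)
  ultimately show ?thesis using mval_sig[OF single_subt[OF wV]] by simp
qed

lemma C_empty: assumes VS: "VS \<in> subt w" and C: "ch w \<inter> VS = {}" shows "VS = {w}"
proof -
  have "x = w" if x: "x \<in> VS" for x
  proof (rule ccontr)
    assume xw: "x \<noteq> w"
    have xD: "x \<in> D w" using x subt_D[OF VS] by blast
    then obtain u where u: "u \<in> ch w" "x \<in> D u" using D_ch xw by blast
    have "u \<in> set (pi x)" using u(2) unfolding D_def by simp
    moreover have "u \<in> D w" using ch_D[OF u(1)] D_self ch_V[OF u(1)] by blast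
    ultimately have "u \<in> VS" using anc_closed[OF VS x] by blast
    then show False using C u by blast
  qed
  then show ?thesis using subt_w[OF VS] by blast
qed

lemma seg_ch: assumes u: "u \<in> ch w" and l: "l \<in> D u" shows "seg w l = w # seg u l"
proof -
  obtain b where b: "pi l = pi u @ b" using D_pi[OF l] by blast
  have pu: "pi u = pi w @ [u]" using ch_pi[OF u] .
  show ?thesis unfolding seg_def b pu by simp
qed


lemma decomp_subt: assumes VS: "VS \<in> subt w" and u: "u \<in> ch w \<inter> VS"
  shows "VS \<inter> D u \<in> subt u"
proof -
  have uV: "u \<in> V" using ch_V u by blast
  have "u \<in> VS \<inter> D u" using u D_self[OF uV] by blast
  moreover have "\<forall>x\<in>VS \<inter> D u. x \<noteq> u \<longrightarrow> par x \<in> VS \<inter> D u"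
  proof (intro ballI impI)
    fix x assume x: "x \<in> VS \<inter> D u" "x \<noteq> u"
    have "x \<noteq> w" using x ch_D u by blast
    then have "par x \<in> VS" using subt_par[OF VS] x by blast
    moreover have "par x \<in> D u" using seg_rec(2) x by blast
    ultimately show "par x \<in> VS \<inter> D u" by blast
  qed
  ultimately show ?thesis unfolding subt_def by blast
qed

lemma decomp_leaves: assumes VS: "VS \<in> subt w" and C: "ch w \<inter> VS \<noteq> {}"
  shows "leaves VS = (\<Union>u\<in>ch w \<inter> VS. leaves (VS \<inter> D u))"
proof (rule set_eqI, rule iffI)
  fix l assume l: "l \<in> leaves VS"
  then have lVS: "l \<in> VS" and lc: "ch l \<inter> VS = {}" unfolding leaves_def by auto
  have "l \<noteq> w" using lc C by blast
  moreover have lD: "l \<in> D w" using lVS subt_D[OF VS] by blast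
  ultimately obtain u where u: "u \<in> ch w" "l \<in> D u" using D_ch by blast
  have "u \<in> set (pi l)" using u(2) unfolding D_def by simp
  moreover have "u \<in> D w" using ch_D[OF u(1)] D_self ch_V[OF u(1)] by blast
  ultimately have "u \<in> VS" using anc_closed[OF VS lVS] by blast
  moreover have "l \<in> leaves (VS \<inter> D u)" using lVS u lc unfolding leaves_def by blast
  ultimately show "l \<in> (\<Union>u\<in>ch w \<inter> VS. leaves (VS \<inter> D u))" using u by blast
next
  fix l assume "l \<in> (\<Union>u\<in>ch w \<inter> VS. leaves (VS \<inter> D u))"
  then obtain u where u: "u \<in> ch w \<inter> VS" "l \<in> leaves (VS \<inter> D u)" by blast
  then have l: "l \<in> VS" "l \<in> D u" "ch l \<inter> (VS \<inter> D u) = {}" unfolding leaves_def by auto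
  have "ch l \<subseteq> D u" using ch_in_D D_trans l(2) by blast
  then have "ch l \<inter> VS = {}" using l(3) by blast
  then show "l \<in> leaves VS" using l unfolding leaves_def by blast
qed

lemma decomp_sig: assumes VS: "VS \<in> subt w" and u: "u \<in> ch w \<inter> VS"
  and l: "l \<in> leaves (VS \<inter> D u)"
  shows "sig VS w l = int (card (ch w \<inter> VS)) - 1 + sig (VS \<inter> D u) u l"
proof -
  let ?U = "VS \<inter> D u"
  have U: "?U \<in> subt u" using decomp_subt[OF VS u] .
  have lU: "l \<in> ?U" using l unfolding leaves_def by blast
  have ss: "set (seg u l) \<subseteq> ?U" using seg_in_VS[OF U lU] by blast
  have wn: "w \<notin> set (seg u l)" using ss ch_D u by blast
  have sw: "seg w l = w # seg u l" using seg_ch u lU by blast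
  have uin: "u \<in> set (seg u l)" unfolding seg_def by simp
  have fin: "finite (set (seg u l))" by simp
  have t1: "tm VS w x = tm ?U u x + (if x = u then 1 else 0)" if x: "x \<in> set (seg u l)" for x
  proof -
    have xU: "x \<in> ?U" using x ss by blast
    have "ch x \<subseteq> D u" using ch_in_D D_trans xU by blast
    then have "ch x \<inter> VS = ch x \<inter> ?U" by blast
    moreover have "x \<noteq> w" using x wn by blast
    ultimately show ?thesis unfolding tm_def by simp
  qed
  have "sig VS w l = tm VS w w + (\<Sum>x\<in>set (seg u l). tm VS w x)"
    unfolding sig_def sw using wn by simp
  also have "(\<Sum>x\<in>set (seg u l). tm VS w x) = (\<Sum>x\<in>set (seg u l). tm ?U u x + (if x = u then 1 else 0))"
    using t1 by (rule sum.cong[OF refl])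
  also have "\<dots> = sig ?U u l + 1"
    unfolding sig_def sum.distrib using uin fin by simp
  also have "tm VS w w = int (card (ch w \<inter> VS)) - 2" unfolding tm_def by simp
  finally show ?thesis by simp
qed

lemma decomp_mval: assumes VS: "VS \<in> subt w" and C: "ch w \<inter> VS \<noteq> {}"
  shows "mval w VS = int (card (ch w \<inter> VS)) - 1 + Min ((\<lambda>u. mval u (VS \<inter> D u)) ` (ch w \<inter> VS))"
proof -
  let ?C = "ch w \<inter> VS"
  have finC: "finite ?C" using fin_ch by simp
  have L: "\<And>u. u \<in> ?C \<Longrightarrow> finite (leaves (VS \<inter> D u)) \<and> leaves (VS \<inter> D u) \<noteq> {}"
    using leaves_ne decomp_subt[OF VS] by blast
  have "mval w VS = Min (sig VS w ` (\<Union>u\<in>?C. leaves (VS \<inter> D u)))"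
    unfolding mval_sig[OF VS] decomp_leaves[OF VS C] ..
  also have "\<dots> = Min ((\<lambda>u. Min (sig VS w ` leaves (VS \<inter> D u))) ` ?C)"
    using Min_UN[OF finC C L] .
  also have "\<dots> = Min ((\<lambda>u. int (card ?C) - 1 + mval u (VS \<inter> D u)) ` ?C)"
  proof (rule arg_cong[where f = Min], rule image_cong[OF refl])
    fix u assume u: "u \<in> ?C"
    have "sig VS w ` leaves (VS \<inter> D u) = (\<lambda>l. int (card ?C) - 1 + sig (VS \<inter> D u) u l) ` leaves (VS \<inter> D u)"
      using decomp_sig[OF VS u] by (intro image_cong) auto
    then have "Min (sig VS w ` leaves (VS \<inter> D u)) = int (card ?C) - 1 + Min (sig (VS \<inter> D u) u ` leaves (VS \<inter> D u))"
    proof -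
      have "Min ((\<lambda>l. (int (card ?C) - 1) + sig (VS \<inter> D u) u l) ` leaves (VS \<inter> D u))
          = (int (card ?C) - 1) + Min (sig (VS \<inter> D u) u ` leaves (VS \<inter> D u))"
        using L[OF u] by (intro Min_shift) auto
      then show ?thesis using \<open>sig VS w ` leaves (VS \<inter> D u) = _\<close> by simp
    qed
    then show "Min (sig VS w ` leaves (VS \<inter> D u)) = int (card ?C) - 1 + mval u (VS \<inter> D u)"
      using mval_sig[OF decomp_subt[OF VS u]] by simp
  qed
  also have "\<dots> = int (card ?C) - 1 + Min ((\<lambda>u. mval u (VS \<inter> D u)) ` ?C)"
    using Min_shift[OF finC C] .
  finally show ?thesis .
qed

end


lemma Min_mono_pw:
  fixes f g :: "'a \<Rightarrow> 'b::linorder"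
  assumes "finite C" "C \<noteq> {}" "\<And>u. u \<in> C \<Longrightarrow> f u \<le> g u"
  shows "Min (f ` C) \<le> Min (g ` C)"
proof -
  have "Min (g ` C) \<in> g ` C" using assms by simp
  then obtain u where u: "u \<in> C" "Min (g ` C) = g u" by blast
  have "Min (f ` C) \<le> f u" using assms u by simp
  also have "\<dots> \<le> g u" using assms u by simp
  finally show ?thesis using u by simp
qed

lemma f_step_cong: "(\<And>x. x \<in> C \<Longrightarrow> g1 x = g2 x) \<Longrightarrow> f_step g1 C = f_step g2 C"
proof -
  assume a: "\<And>x. x \<in> C \<Longrightarrow> g1 x = g2 x"
  have "image_mset g1 (mset_set C) = image_mset g2 (mset_set C)"
  proof (rule image_mset_cong)
    fix x assume "x \<in># mset_set C"
    then have "x \<in> C" by (metis elem_mset_set empty_iff finite_set_mset_mset_set mset_set.infinite set_mset_empty)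
    then show "g1 x = g2 x" using a by blast
  qed
  then show ?thesis unfolding f_step_def by simp
qed

context rtree begin

definition Mx :: "'a \<Rightarrow> int" where "Mx w = Max (mval w ` subt w)"

definition Cs :: "'a \<Rightarrow> 'a set set" where "Cs w = {C. C \<subseteq> ch w \<and> C \<noteq> {}}"

definition qv :: "'a set \<Rightarrow> int" where "qv C = int (card C) - 1 + Min (Mx ` C)"

lemma fin_Cs: "finite (Cs w)"
proof -
  have "Cs w \<subseteq> Pow (ch w)" unfolding Cs_def by blast
  then show ?thesis using fin_ch finite_subset by blast
qed

lemma Mx_ge: "VS \<in> subt w \<Longrightarrow> mval w VS \<le> Mx w"
  unfolding Mx_def using finite_subt by simp

lemma Mx_in: assumes wV: "w \<in> V" shows "\<exists>S\<in>subt w. mval w S = Mx w"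
proof -
  have "subt w \<noteq> {}" using single_subt[OF wV] by blast
  then have "Mx w \<in> mval w ` subt w" unfolding Mx_def using finite_subt by simp
  then show ?thesis by (metis imageE)
qed

lemma Mx_ge2: assumes "w \<in> V" shows "-2 \<le> Mx w"
  using Mx_ge[OF single_subt[OF assms]] mval_single[OF assms] by simp

lemma Mx_rec: assumes wV: "w \<in> V" shows "Mx w = Max (insert (-2) (qv ` Cs w))"
  unfolding Mx_def
proof (rule Max_eq_if)
  show "finite (mval w ` subt w)" using finite_subt by simp
  show "finite (insert (-2) (qv ` Cs w))" using fin_Cs by simp
  show "\<forall>a\<in>mval w ` subt w. \<exists>b\<in>insert (-2) (qv ` Cs w). a \<le> b"
  proof
    fix a assume "a \<in> mval w ` subt w"
    then obtain VS where VS: "VS \<in> subt w" "a = mval w VS" by blast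
    show "\<exists>b\<in>insert (-2) (qv ` Cs w). a \<le> b"
    proof (cases "ch w \<inter> VS = {}")
      case True
      then have "VS = {w}" using C_empty[OF VS(1)] by blast
      then have "a = -2" using VS mval_single[OF wV] by simp
      then show ?thesis by simp
    next
      case False
      let ?C = "ch w \<inter> VS"
      have CC: "?C \<in> Cs w" unfolding Cs_def using False by blast
      have finC: "finite ?C" using fin_ch by simp
      have "a = int (card ?C) - 1 + Min ((\<lambda>u. mval u (VS \<inter> D u)) ` ?C)"
        using decomp_mval[OF VS(1) False] VS(2) by simp
      also have "\<dots> \<le> int (card ?C) - 1 + Min (Mx ` ?C)"
      proof -
        have "Min ((\<lambda>u. mval u (VS \<inter> D u)) ` ?C) \<le> Min (Mx ` ?C)"
        proof (rule Min_mono_pw[OF finC False])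
          fix u assume u: "u \<in> ?C"
          show "mval u (VS \<inter> D u) \<le> Mx u"
            using Mx_ge[OF decomp_subt[OF VS(1) u]] .
        qed
        then show ?thesis by simp
      qed
      finally have "a \<le> qv ?C" unfolding qv_def .
      then show ?thesis using CC by blast
    qed
  qed
  show "\<forall>b\<in>insert (-2) (qv ` Cs w). \<exists>a\<in>mval w ` subt w. b \<le> a"
  proof
    fix b assume "b \<in> insert (-2) (qv ` Cs w)"
    then consider "b = -2" | C where "C \<in> Cs w" "b = qv C" by blast
    then show "\<exists>a\<in>mval w ` subt w. b \<le> a"
    proof cases
      case 1
      then show ?thesis using single_subt[OF wV] mval_single[OF wV] by force
    next
      case 2
      have C: "C \<subseteq> ch w" "C \<noteq> {}" using 2 unfolding Cs_def by auto
      have finC: "finite C" using C fin_ch finite_subset by blast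
      define S where "S u = (SOME S. S \<in> subt u \<and> mval u S = Mx u)" for u
      have S: "S u \<in> subt u \<and> mval u (S u) = Mx u" if u: "u \<in> C" for u
      proof -
        have "u \<in> V" using ch_V C u by blast
        then have "\<exists>S. S \<in> subt u \<and> mval u S = Mx u" using Mx_in by blast
        then show ?thesis unfolding S_def by (rule someI_ex)
      qed
      have SD: "S u \<subseteq> D u" if "u \<in> C" for u using S[OF that] subt_D by blast
      define VS where "VS = insert w (\<Union>u\<in>C. S u)"
      have VSsub: "VS \<in> subt w"
      proof -
        have "w \<in> D w" using D_self[OF wV] .
        moreover have "S u \<subseteq> D w" if "u \<in> C" for u
          using SD[OF that] ch_D C that by blast
        moreover have "par x \<in> VS" if x: "x \<in> VS" "x \<noteq> w" for x
        proof -
          obtain u where u: "u \<in> C" "x \<in> S u" using x unfolding VS_def by blast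
          show ?thesis
          proof (cases "x = u")
            case True
            then have "par x = w" using C u unfolding ch_def by auto
            then show ?thesis unfolding VS_def by simp
          next
            case False
            then have "par x \<in> S u" using subt_par S[OF u(1)] u(2) by blast
            then show ?thesis unfolding VS_def using u by blast
          qed
        qed
        ultimately show ?thesis unfolding subt_def VS_def by blast
      qed
      have chVS: "ch w \<inter> VS = C"
      proof
        show "C \<subseteq> ch w \<inter> VS" using C S subt_w unfolding VS_def by blast
        show "ch w \<inter> VS \<subseteq> C"
        proof
          fix c assume c: "c \<in> ch w \<inter> VS"
          have "c \<noteq> w" using ch_neq c by blast
          then obtain u where u: "u \<in> C" "c \<in> S u" using c unfolding VS_def by blast
          have "c \<in> D u" using SD u by blast
          moreover have "c \<in> D c" using D_self ch_V c by blast
          ultimately have "u = c" using D_disj[of u w c c] C u c by blast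
          then show "c \<in> C" using u by simp
        qed
      qed
      have VSD: "VS \<inter> D u = S u" if u: "u \<in> C" for u
      proof
        show "S u \<subseteq> VS \<inter> D u" using SD[OF u] u unfolding VS_def by blast
        show "VS \<inter> D u \<subseteq> S u"
        proof
          fix x assume x: "x \<in> VS \<inter> D u"
          have "w \<notin> D u" using ch_D C u by blast
          then have "x \<noteq> w" using x by blast
          then obtain u' where u': "u' \<in> C" "x \<in> S u'" using x unfolding VS_def by blast
          have "u' = u" using D_disj[of u' w u x] SD[OF u'(1)] u' u C x by blast
          then show "x \<in> S u" using u' by simp
        qed
      qed
      have "mval w VS = int (card C) - 1 + Min ((\<lambda>u. mval u (VS \<inter> D u)) ` C)"
        using decomp_mval[OF VSsub] chVS C by simp
      also have "(\<lambda>u. mval u (VS \<inter> D u)) ` C = Mx ` C"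
        using VSD S by (intro image_cong) auto
      finally have "mval w VS = qv C" unfolding qv_def .
      then show ?thesis using 2 VSsub by force
    qed
  qed
qed

definition cand :: "'a \<Rightarrow> nat" where
  "cand w = (if w \<in> V then nat (2 + Mx w) else 0)"

lemma int_cand: "w \<in> V \<Longrightarrow> int (cand w) = 2 + Mx w"
  unfolding cand_def using Mx_ge2[of w] by simp

lemma cand_rec: assumes wV: "w \<in> V" shows "cand w = f_step cand (ch w)"
proof (cases "ch w = {}")
  case True
  then have "Cs w = {}" unfolding Cs_def by blast
  then have "Mx w = -2" using Mx_rec[OF wV] by simp
  then show ?thesis unfolding cand_def using wV True by (simp add: f_step_def)
next
  case False
  let ?N = "\<lambda>S. card S - 1 + Min (cand ` S)"
  have fs: "f_step cand (ch w) = Max (?N ` Cs w)"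
  proof -
    have "{card S - 1 + Min (cand ` S) | S. S \<subseteq> ch w \<and> S \<noteq> {}} = ?N ` Cs w"
      unfolding Cs_def by blast
    then show ?thesis using f_step_alt[OF fin_ch False, of cand] by simp
  qed
  have ne: "Cs w \<noteq> {}" using False unfolding Cs_def by blast
  have monoint: "mono int" by (rule monoI) simp
  have NS: "int (?N S) = qv S + 2" if S: "S \<in> Cs w" for S
  proof -
    have S': "S \<subseteq> ch w" "S \<noteq> {}" using S unfolding Cs_def by auto
    have finS: "finite S" using S' fin_ch finite_subset by blast
    have cS: "card S \<ge> 1" using finS S' by (simp add: Suc_le_eq card_gt_0_iff)
    have "int (Min (cand ` S)) = Min (int ` cand ` S)"
      using finS S' by (intro mono_Min_commute[OF monoint]) auto
    also have "int ` cand ` S = (\<lambda>u. 2 + Mx u) ` S"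
      unfolding image_image using int_cand ch_V S' by (intro image_cong) auto
    also have "Min \<dots> = 2 + Min (Mx ` S)" using Min_shift[OF finS S'(2)] .
    finally show ?thesis unfolding qv_def using cS by (simp add: of_nat_diff)
  qed
  have "int (f_step cand (ch w)) = Max (int ` ?N ` Cs w)"
    unfolding fs using fin_Cs ne by (intro mono_Max_commute[OF monoint]) auto
  also have "int ` ?N ` Cs w = (\<lambda>S. qv S + 2) ` Cs w"
    unfolding image_image using NS by (intro image_cong) auto
  finally have i1: "int (f_step cand (ch w)) = Max ((\<lambda>S. qv S + 2) ` Cs w)" .
  have mono2: "mono (\<lambda>x::int. 2 + x)" by (rule monoI) simp
  have "int (cand w) = 2 + Max (insert (-2) (qv ` Cs w))" using int_cand[OF wV] Mx_rec[OF wV] by simp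
  also have "\<dots> = Max ((\<lambda>x. 2 + x) ` insert (-2) (qv ` Cs w))"
    using fin_Cs by (intro mono_Max_commute[OF mono2]) auto
  also have "(\<lambda>x. 2 + x) ` insert (-2) (qv ` Cs w) = insert 0 ((\<lambda>S. qv S + 2) ` Cs w)"
    by (auto simp: image_image add.commute)
  also have "Max (insert 0 ((\<lambda>S. qv S + 2) ` Cs w)) = max 0 (Max ((\<lambda>S. qv S + 2) ` Cs w))"
    using fin_Cs ne by (intro Max_insert) auto
  also have "\<dots> = Max ((\<lambda>S. qv S + 2) ` Cs w)"
  proof -
    have chC: "ch w \<in> Cs w" using False unfolding Cs_def by blast
    have "0 \<le> int (?N (ch w))" by simp
    then have "0 \<le> qv (ch w) + 2" using NS[OF chC] by simp
    moreover have "qv (ch w) + 2 \<le> Max ((\<lambda>S. qv S + 2) ` Cs w)" using chC fin_Cs by simp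
    ultimately show ?thesis by simp
  qed
  finally show ?thesis using i1 by simp
qed

lemma f_tree_cand: "f_tree V E v = cand"
  unfolding f_tree_def
proof (rule the_equality)
  show "(\<forall>w\<in>V. cand w = f_step cand (children V E v w)) \<and> (\<forall>w. w \<notin> V \<longrightarrow> cand w = 0)"
    using cand_rec children_eq unfolding cand_def by auto
next
  fix g assume g: "(\<forall>w\<in>V. g w = f_step g (children V E v w)) \<and> (\<forall>w. w \<notin> V \<longrightarrow> g w = 0)"
  have "g w = cand w" if wV: "w \<in> V" for w
  proof (rule tree_induct[where P = "\<lambda>w. g w = cand w", OF _ wV])
    fix w assume 1: "w \<in> V" "\<And>u. u \<in> ch w \<Longrightarrow> g u = cand u"
    have "g w = f_step g (ch w)" using g 1 children_eq by simp
    also have "\<dots> = f_step cand (ch w)" using 1 by (intro f_step_cong) blast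
    also have "\<dots> = cand w" using cand_rec[OF 1(1)] by simp
    finally show "g w = cand w" .
  qed
  then show "g = cand" using g unfolding cand_def by (intro ext) auto
qed

end


context rtree begin

lemma seg_v: assumes x: "x \<in> V" shows "seg v x = pi x"
proof -
  have "pi x = v # tl (pi x)" using pi_prop[OF x] pi_ne[OF x] by (metis list.collapse)
  then show ?thesis unfolding seg_def pi_v by (metis One_nat_def drop0 drop_Suc_Cons length_Cons list.size(3))
qed

lemma sub_char:
  "(subgraph VS ES V E \<and> connected_graph VS ES \<and> v \<in> VS) \<longleftrightarrow> (VS \<in> subt v \<and> ES = Eind VS)"
proof
  assume a: "subgraph VS ES V E \<and> connected_graph VS ES \<and> v \<in> VS"
  then have sg: "VS \<subseteq> V" "ES \<subseteq> E" "graph VS ES" and cn: "connected_graph VS ES" and vVS: "v \<in> VS"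
    unfolding subgraph_def by auto
  have pth: "\<exists>p. is_path ES p \<and> set p \<subseteq> VS \<and> hd p = x \<and> last p = y" if "x \<in> VS" "y \<in> VS" for x y
    using cn that unfolding connected_graph_def by blast
  have e1: "ES \<subseteq> Eind VS" unfolding Eind_def using sg graph_edge_sub by blast
  have e2: "Eind VS \<subseteq> ES"
  proof
    fix e assume e: "e \<in> Eind VS"
    then have eE: "e \<in> E" "e \<subseteq> VS" unfolding Eind_def by auto
    obtain a b where ab: "a \<noteq> b" "e = {a, b}" using eE(1) graphVE unfolding graph_def by blast
    have abV: "a \<in> VS" "b \<in> VS" using ab eE by auto
    show "e \<in> ES"
    proof (rule ccontr)
      assume ne: "e \<notin> ES"
      obtain p where p: "is_path ES p" "set p \<subseteq> VS" "hd p = a" "last p = b" using pth[OF abV] by blast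
      have "p \<noteq> []" using p(1) by (simp add: is_path_def)
      then obtain p' where p1: "p = a # p'" using p(3) by (cases p) auto
      have "p' \<noteq> []" using p1 p(4) ab by auto
      then obtain c r where p2: "p' = c # r" by (cases p') auto
      have "r \<noteq> []"
      proof
        assume "r = []"
        then have "p = [a, b]" using p1 p2 p(4) by simp
        then have "adj ES a b" using p(1) unfolding is_path_def by force
        then show False using ne ab unfolding adj_def by simp
      qed
      have cyc: "is_cycle E p"
      proof -
        have "length p \<ge> 3" using p1 p2 \<open>r \<noteq> []\<close> by (cases r) auto
        moreover have "is_path E p" using is_path_mono[OF sg(2) p(1)] .
        moreover have "adj E b a" using ab eE unfolding adj_def by (auto simp: insert_commute)
        ultimately show ?thesis unfolding is_cycle_def using p by simp
      qed
      have "set p \<subseteq> V" using p(2) sg(1) by blast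
      then show False using nocyc cyc by blast
    qed
  qed
  have "VS \<in> subt v"
    unfolding subt_def
  proof (intro CollectI conjI ballI impI)
    show "v \<in> VS" using vVS .
    show "VS \<subseteq> D v" using sg(1) D_v by simp
    fix x assume x: "x \<in> VS" "x \<noteq> v"
    obtain p where p: "is_path ES p" "set p \<subseteq> VS" "hd p = v" "last p = x" using pth[OF vVS x(1)] by blast
    have "pi x = p" using pi_eq is_path_mono[OF sg(2) p(1)] p(3,4) by blast
    moreover have "par x \<in> set (pi x)" using par_in_pi x sg(1) by blast
    ultimately show "par x \<in> VS" using p(2) by blast
  qed
  then show "VS \<in> subt v \<and> ES = Eind VS" using e1 e2 by blast
next
  assume a: "VS \<in> subt v \<and> ES = Eind VS"
  then have VS: "VS \<in> subt v" and ES: "ES = Eind VS" by auto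
  have VSV: "VS \<subseteq> V" using subt_D[OF VS] D_sub by blast
  have g: "graph VS (Eind VS)"
    unfolding graph_def
  proof (intro conjI ballI)
    show "finite VS" using subt_fin[OF VS] .
    fix e assume e: "e \<in> Eind VS"
    then have "e \<in> E" "e \<subseteq> VS" unfolding Eind_def by auto
    then obtain a b where ab: "a \<noteq> b" "e = {a, b}" using graphVE unfolding graph_def by blast
    then show "\<exists>x y. x \<noteq> y \<and> e = {x, y} \<and> x \<in> VS \<and> y \<in> VS" using \<open>e \<subseteq> VS\<close> by auto
  qed
  have pix: "is_path (Eind VS) (pi x) \<and> set (pi x) \<subseteq> VS" if x: "x \<in> VS" for x
  proof -
    have xV: "x \<in> V" using x VSV by blast
    have "path_from VS (Eind VS) v (seg v x)" using path_from_char[OF VS] x by blast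
    then show ?thesis using seg_v[OF xV] unfolding path_from_def by simp
  qed
  have cn: "connected_graph VS (Eind VS)"
    unfolding connected_graph_def
  proof (intro conjI ballI)
    show "VS \<noteq> {}" using subt_w[OF VS] by blast
    fix x y assume x: "x \<in> VS" and y: "y \<in> VS"
    have xV: "x \<in> V" and yV: "y \<in> V" using x y VSV by auto
    define wk where "wk = rev (pi x) @ tl (pi y)"
    have wwk: "walk (Eind VS) wk" unfolding wk_def
      using pix[OF x] pix[OF y] pi_prop[OF xV] pi_prop[OF yV] pi_ne[OF xV]
      by (intro walk_append) (auto simp: is_path_walk walk_rev last_rev)
    have hw: "hd wk = x" unfolding wk_def using pi_ne[OF xV] pi_prop[OF xV] by (simp add: hd_rev)
    have lw: "last wk = y"
    proof (cases "tl (pi y) = []")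
      case True
      then have "pi y = [v]" using pi_prop[OF yV] pi_ne[OF yV] by (metis list.collapse)
      then have "y = v" using pi_prop[OF yV] by (metis last_ConsL)
      then show ?thesis unfolding wk_def using True pi_ne[OF xV] pi_prop[OF xV] by (simp add: last_rev)
    next
      case False
      then show ?thesis unfolding wk_def using pi_prop[OF yV] by (simp add: last_tl)
    qed
    have "set (tl (pi y)) \<subseteq> set (pi y)" by (cases "pi y") auto
    then have swk: "set wk \<subseteq> VS" unfolding wk_def using pix[OF x] pix[OF y] by auto
    obtain r where r: "is_path (Eind VS) r" "set r \<subseteq> set wk" "hd r = hd wk" "last r = last wk"
      using walk_to_path[OF wwk] by blast
    show "\<exists>p. is_path (Eind VS) p \<and> set p \<subseteq> VS \<and> hd p = x \<and> last p = y"
      using r hw lw swk by blast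
  qed
  show "subgraph VS ES V E \<and> connected_graph VS ES \<and> v \<in> VS"
    unfolding subgraph_def ES using VSV Eind_sub g cn subt_w[OF VS] by blast
qed

lemma main: "int (f_tree V E v v) = 2 + Max ((\<lambda>(VS, ES). Min ((\<lambda>P. \<Sum>w\<in>set P. int (deg ES w) - 2) ` max_paths VS ES v))
            ` {(VS, ES). subgraph VS ES V E \<and> connected_graph VS ES \<and> v \<in> VS})"
proof -
  have s: "{(VS, ES). subgraph VS ES V E \<and> connected_graph VS ES \<and> v \<in> VS} = (\<lambda>VS. (VS, Eind VS)) ` subt v"
    using sub_char by auto
  have "(\<lambda>(VS, ES). Min ((\<lambda>P. \<Sum>w\<in>set P. int (deg ES w) - 2) ` max_paths VS ES v))
            ` {(VS, ES). subgraph VS ES V E \<and> connected_graph VS ES \<and> v \<in> VS} = mval v ` subt v"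
    unfolding s image_image mval_def by simp
  moreover have "int (f_tree V E v v) = 2 + Mx v" using f_tree_cand int_cand[OF vV] by simp
  ultimately show ?thesis unfolding Mx_def by simp
qed

end

theorem proposition4p2:
  fixes V :: "'a set" and E :: "'a set set" and v :: 'a
  assumes "is_tree V E" and "card V \<ge> 3" and "v \<in> V"
  shows "int (f_tree V E v v) = 2 + Max ((\<lambda>(VS, ES). Min ((\<lambda>P. \<Sum>w\<in>set P. int (deg ES w) - 2) ` max_paths VS ES v))
            ` {(VS, ES). subgraph VS ES V E \<and> connected_graph VS ES \<and> v \<in> VS})"
proof -
  interpret rtree V E v using assms(1,3) by unfold_locales
  show ?thesis using main .
qed


end
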